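(* Let $g_A:B\to A$ be a small surjection in $\mathbf C$ with $\ker g_A=(\tau)$ and $\tau\,\mathfrak m_B=0$. Suppose given objects $(S,\Delta_S,h_S)$ of $\mathscr F$ over $B$ and $(R,\Delta_R,h_R)$ of $\mathscr F$ over $A$, and a morphism between them over $g_A$, i.e. a homomorphism $g_R:S\to R$ compatible with the structure maps, the sections and the maps to $R_0$, such that $S\otimes_B A\cong R$. If the object over $A$ is planar, then so is the object over $B$.
   Context: $\Lambda$ is a complete noetherian local ring with residue field $k$; $\mathbf C$ is the category of Artinian local $\Lambda$-algebras with residue field $k$. Fix $\gamma,\delta\in k$ with $\gamma^{2}-4\delta\neq0$, $q=X^{2}+\gamma XY+\delta Y^{2}$, $R_0=k[[X,Y]]/(q)$, with $u,v$ the classes of $X,Y$ and $\Delta_0:R_0\to k$ the residue map. Fix liftings $\tilde\gamma,\tilde\delta\in\Lambda$ of $\gamma,\delta$; for $A\in\mathbf C$ let $\gamma_A,\delta_A$ be their images in $A$ and $q_A=X^{2}+\gamma_AXY+\delta_AY^{2}$. An object of $\mathscr F$ over $A$ is a commutative cocartesian square of local rings and local homomorphisms: a local $A$-algebra $R$, flat over $A$ and $\mathfrak m_R$-adically complete, a local $A$-algebra section $\Delta:R\to A$, and $h:R\to R_0$ over $A\to k$ inducing $R\otimes_A k\cong R_0$, compatible with $\Delta,\Delta_0$. Such an object is called planar if it is (isomorphic to) the base change of the object $\xi$: $A_{pd}=\Lambda[[S,T]]$, $R_{pd}=A_{pd}[[X,Y]]/(\tilde q(X,Y)-\tilde q(S,T))$,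 $\Delta_{pd}(X)=S,\Delta_{pd}(Y)=T$, along some local homomorphism $A_{pd}\to A$; equivalently, there are $s,t\in\mathfrak m_A$ and an isomorphism $R\cong A[[X,Y]]/(q_A(X,Y)-q_A(s,t))$ under which $\Delta(X)=s$, $\Delta(Y)=t$ and $h$ sends $X,Y$ to $u,v$. *)

theory Defs
  imports "HOL-Computational_Algebra.Formal_Power_Series"
begin

definition rhom :: "('a::comm_ring_1 \<Rightarrow> 'b::comm_ring_1) \<Rightarrow> bool" where
  "rhom f \<longleftrightarrow> f 1 = 1 \<and> (\<forall>x y. f (x + y) = f x + f y) \<and> (\<forall>x y. f (x * y) = f x * f y)"

definition is_ideal :: "'a::comm_ring_1 set \<Rightarrow> bool" where
  "is_ideal I \<longleftrightarrow> 0 \<in> I \<and> (\<forall>x\<in>I. \<forall>y\<in>I. x + y \<in> I) \<and> (\<forall>x\<in>I. \<forall>r. r * x \<in> I)"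

definition ideal_gen :: "'a::comm_ring_1 set \<Rightarrow> 'a set" where
  "ideal_gen S = \<Inter>{I. is_ideal I \<and> S \<subseteq> I}"

definition ideal_prod :: "'a::comm_ring_1 set \<Rightarrow> 'a set \<Rightarrow> 'a set" where
  "ideal_prod I J = ideal_gen {x * y | x y. x \<in> I \<and> y \<in> J}"

primrec ideal_pow :: "'a::comm_ring_1 set \<Rightarrow> nat \<Rightarrow> 'a set" where
  "ideal_pow I 0 = UNIV"
| "ideal_pow I (Suc n) = ideal_prod I (ideal_pow I n)"

text \<open>The set of non-units; in a local ring this is the maximal ideal.\<close>
definition nonunits :: "'a::comm_ring_1 set" where
  "nonunits = {x. \<not> x dvd 1}"

definition kernel :: "('a \<Rightarrow> 'b::zero) \<Rightarrow> 'a set" where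
  "kernel f = {x. f x = 0}"

definition local_ring :: "'a::comm_ring_1 itself \<Rightarrow> bool" where
  "local_ring _ \<longleftrightarrow> (1::'a) \<noteq> 0 \<and> is_ideal (nonunits :: 'a set)"

definition local_hom :: "('a::comm_ring_1 \<Rightarrow> 'b::comm_ring_1) \<Rightarrow> bool" where
  "local_hom f \<longleftrightarrow> (\<forall>x. \<not> x dvd 1 \<longrightarrow> \<not> f x dvd 1)"

text \<open>A surjective ring map to a field whose kernel is the set of non-units:
  the ring is local with this residue map onto its residue field.\<close>
definition residue_map :: "('a::comm_ring_1 \<Rightarrow> 'k::field) \<Rightarrow> bool" where
  "residue_map r \<longleftrightarrow> rhom r \<and> surj r \<and> kernel r = nonunits"

definition noetherian_ring :: "'a::comm_ring_1 itself \<Rightarrow> bool" where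
  "noetherian_ring _ \<longleftrightarrow> (\<forall>C :: nat \<Rightarrow> 'a set. (\<forall>n. is_ideal (C n) \<and> C n \<subseteq> C (Suc n))
       \<longrightarrow> (\<exists>N. \<forall>n\<ge>N. C n = C N))"

definition artinian_ring :: "'a::comm_ring_1 itself \<Rightarrow> bool" where
  "artinian_ring _ \<longleftrightarrow> (\<forall>C :: nat \<Rightarrow> 'a set. (\<forall>n. is_ideal (C n) \<and> C (Suc n) \<subseteq> C n)
       \<longrightarrow> (\<exists>N. \<forall>n\<ge>N. C n = C N))"

definition adic_complete :: "'a::comm_ring_1 set \<Rightarrow> bool" where
  "adic_complete I \<longleftrightarrow> (\<Inter>n. ideal_pow I n) = {0} \<and>
     (\<forall>x :: nat \<Rightarrow> 'a. (\<forall>n. x (Suc n) - x n \<in> ideal_pow I n) \<longrightarrow>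
        (\<exists>l. \<forall>n. l - x n \<in> ideal_pow I n))"

text \<open>Flatness of an algebra \<open>\<iota> : A \<rightarrow> R\<close>, via the equational criterion.\<close>
definition flat_alg :: "('a::comm_ring_1 \<Rightarrow> 'r::comm_ring_1) \<Rightarrow> bool" where
  "flat_alg \<iota> \<longleftrightarrow> (\<forall>n (a :: nat \<Rightarrow> 'a) (x :: nat \<Rightarrow> 'r). (\<Sum>i<n. \<iota> (a i) * x i) = 0 \<longrightarrow>
     (\<exists>m (c :: nat \<Rightarrow> nat \<Rightarrow> 'a) (y :: nat \<Rightarrow> 'r).
        (\<forall>i<n. x i = (\<Sum>j<m. \<iota> (c i j) * y j)) \<and> (\<forall>j<m. (\<Sum>i<n. a i * c i j) = 0)))"

section \<open>Two-variable power series  A[[X,Y]] = (A[[X]])[[Y]]\<close>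

definition C2 :: "'a::comm_ring_1 \<Rightarrow> 'a fps fps" where
  "C2 c = fps_const (fps_const c)"

definition X2 :: "'a::comm_ring_1 fps fps" where
  "X2 = fps_const fps_X"

definition Y2 :: "'a::comm_ring_1 fps fps" where
  "Y2 = fps_X"

definition qform :: "'a::comm_ring_1 \<Rightarrow> 'a \<Rightarrow> 'a \<Rightarrow> 'a \<Rightarrow> 'a" where
  "qform g d x y = x^2 + g * x * y + d * y^2"

definition base_ring :: "('l::comm_ring_1 \<Rightarrow> 'k::field) \<Rightarrow> bool" where
  "base_ring resL \<longleftrightarrow> residue_map resL \<and> noetherian_ring TYPE('l) \<and> adic_complete (nonunits :: 'l set)"

definition C_obj :: "('l::comm_ring_1 \<Rightarrow> 'k::field) \<Rightarrow> ('l \<Rightarrow> 'a::comm_ring_1) \<Rightarrow> ('a \<Rightarrow> 'k) \<Rightarrow> bool" where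
  "C_obj resL lam res \<longleftrightarrow> rhom lam \<and> local_hom lam \<and> residue_map res \<and> artinian_ring TYPE('a)
     \<and> res \<circ> lam = resL"

text \<open>Data of R_0 = k[[X,Y]]/(q): quotient map pi0 and residue map Delta0.\<close>
definition R0_data :: "'k::field \<Rightarrow> 'k \<Rightarrow> ('k fps fps \<Rightarrow> 'z::comm_ring_1) \<Rightarrow> ('z \<Rightarrow> 'k) \<Rightarrow> bool" where
  "R0_data g d pi0 D0 \<longleftrightarrow> g^2 - 4 * d \<noteq> 0 \<and> rhom pi0 \<and> surj pi0 \<and>
     kernel pi0 = ideal_gen {qform (C2 g) (C2 d) X2 Y2} \<and> rhom D0 \<and>
     D0 \<circ> pi0 = (\<lambda>f. fps_nth (fps_nth f 0) 0)"

text \<open>Object (R, Delta, h) of F over A (A with residue map res; R an A-algebra via iota).\<close>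
definition F_obj :: "('k fps fps \<Rightarrow> 'z::comm_ring_1) \<Rightarrow> ('z \<Rightarrow> 'k::field) \<Rightarrow> ('a::comm_ring_1 \<Rightarrow> 'k)
    \<Rightarrow> ('a \<Rightarrow> 'r::comm_ring_1) \<Rightarrow> ('r \<Rightarrow> 'a) \<Rightarrow> ('r \<Rightarrow> 'z) \<Rightarrow> bool" where
  "F_obj pi0 D0 res \<iota> D h \<longleftrightarrow>
     rhom \<iota> \<and> local_ring TYPE('r) \<and> local_hom \<iota> \<and> flat_alg \<iota> \<and> adic_complete (nonunits :: 'r set) \<and>
     rhom D \<and> local_hom D \<and> D \<circ> \<iota> = id \<and>
     rhom h \<and> local_hom h \<and> h \<circ> \<iota> = pi0 \<circ> C2 \<circ> res \<and>
     surj h \<and> kernel h = ideal_gen (\<iota> ` (nonunits :: 'a set)) \<and>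
     res \<circ> D = D0 \<circ> h"

text \<open>Planarity of an object over A, A a \<Lambda>-algebra via lam; gt, dt the fixed lifts.\<close>
definition planar :: "('k::field fps fps \<Rightarrow> 'z::comm_ring_1) \<Rightarrow> ('l::comm_ring_1 \<Rightarrow> 'a::comm_ring_1) \<Rightarrow> 'l \<Rightarrow> 'l
    \<Rightarrow> ('a \<Rightarrow> 'r::comm_ring_1) \<Rightarrow> ('r \<Rightarrow> 'a) \<Rightarrow> ('r \<Rightarrow> 'z) \<Rightarrow> bool" where
  "planar pi0 lam gt dt \<iota> D h \<longleftrightarrow>
     (\<exists>s t (\<phi> :: 'a fps fps \<Rightarrow> 'r). s \<in> nonunits \<and> t \<in> nonunits \<and>
        rhom \<phi> \<and> surj \<phi> \<and>
        kernel \<phi> = ideal_gen {qform (C2 (lam gt)) (C2 (lam dt)) X2 Y2 - C2 (qform (lam gt) (lam dt) s t)} \<and>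
        \<phi> \<circ> C2 = \<iota> \<and> D (\<phi> X2) = s \<and> D (\<phi> Y2) = t \<and>
        h (\<phi> X2) = pi0 X2 \<and> h (\<phi> Y2) = pi0 Y2)"

end

theory Submission
  imports Defs
begin

unbundle fps_syntax

section \<open>Ring homomorphisms\<close>

lemma rhomD: assumes "rhom f"
  shows "f 1 = 1" "f (x + y) = f x + f y" "f (x * y) = f x * f y"
  using assms unfolding rhom_def by auto

lemma rhom_0: assumes "rhom f" shows "f 0 = 0"
proof -
  have "f (0 + 0) = f 0 + f 0" by (rule rhomD(2)[OF assms])
  then have "f 0 + f 0 = f 0 + 0" by (simp only: add_0_right)
  then show ?thesis by (rule add_left_imp_eq)
qed

lemma rhom_uminus: assumes "rhom f" shows "f (- x) = - f x"
proof -
  have "f (x + - x) = f x + f (- x)" by (rule rhomD(2)[OF assms])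
  then have "f x + f (- x) = 0" using rhom_0[OF assms] by (metis right_minus)
  then show ?thesis by (metis add.commute minus_unique)
qed

lemma rhom_diff: assumes "rhom f" shows "f (x - y) = f x - f y"
  using rhomD(2)[OF assms, of x "- y"] rhom_uminus[OF assms, of y] by simp

lemma rhom_power: assumes "rhom f" shows "f (x ^ n) = f x ^ n"
  by (induction n) (simp_all add: rhomD[OF assms])

lemma rhom_sum: assumes "rhom f" shows "f (sum g S) = (\<Sum>i\<in>S. f (g i))"
  by (induction S rule: infinite_finite_induct) (simp_all add: rhom_0[OF assms] rhomD[OF assms])

lemma rhom_of_nat: assumes "rhom f" shows "f (of_nat n) = of_nat n"
  by (induction n) (simp_all add: rhom_0[OF assms] rhomD[OF assms])

lemma rhom_numeral: assumes "rhom f" shows "f (numeral n) = numeral n"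
  using rhom_of_nat[OF assms, of "numeral n"] by simp

lemma rhom_comp: "rhom f \<Longrightarrow> rhom g \<Longrightarrow> rhom (f \<circ> g)"
  unfolding rhom_def by simp

lemma rhom_unit: assumes "rhom f" "x dvd 1" shows "f x dvd 1"
proof -
  from assms(2) obtain y where "1 = x * y" by (auto simp: dvd_def)
  then have "f 1 = f (x * y)" by simp
  then have "1 = f x * f y" by (simp only: rhomD[OF assms(1)])
  then show ?thesis by (rule dvdI)
qed

lemma rhom_qform: assumes "rhom f" shows "f (qform g d x y) = qform (f g) (f d) (f x) (f y)"
  unfolding qform_def by (simp add: rhomD[OF assms] rhom_power[OF assms] power2_eq_square)

section \<open>Ideals\<close>

lemma is_idealD: assumes "is_ideal I"
  shows "0 \<in> I" "x \<in> I \<Longrightarrow> y \<in> I \<Longrightarrow> x + y \<in> I" "x \<in> I \<Longrightarrow> r * x \<in> I"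
  using assms unfolding is_ideal_def by auto

lemma ideal_mult_right: "is_ideal I \<Longrightarrow> x \<in> I \<Longrightarrow> x * r \<in> I"
  using is_idealD(3)[of I x r] by (simp add: mult.commute)

lemma ideal_uminus: "is_ideal I \<Longrightarrow> x \<in> I \<Longrightarrow> - x \<in> I"
  using is_idealD(3)[of I x "-1"] by simp

lemma ideal_diff: "is_ideal I \<Longrightarrow> x \<in> I \<Longrightarrow> y \<in> I \<Longrightarrow> x - y \<in> I"
  using is_idealD(2)[of I x "- y"] ideal_uminus[of I y] by simp

lemma ideal_sum: "is_ideal I \<Longrightarrow> (\<And>i. i \<in> S \<Longrightarrow> g i \<in> I) \<Longrightarrow> sum g S \<in> I"
  by (induction S rule: infinite_finite_induct) (auto intro: is_idealD)

lemma is_ideal_UNIV: "is_ideal UNIV" unfolding is_ideal_def by auto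

lemma is_ideal_ideal_gen: "is_ideal (ideal_gen S)"
  unfolding is_ideal_def ideal_gen_def by auto

lemma ideal_gen_sub: "S \<subseteq> ideal_gen S"
  unfolding ideal_gen_def by auto

lemma ideal_gen_least: "is_ideal I \<Longrightarrow> S \<subseteq> I \<Longrightarrow> ideal_gen S \<subseteq> I"
  unfolding ideal_gen_def by auto

lemma ideal_gen_singleton: "ideal_gen {a} = {r * a | r. True}"
proof
  have "is_ideal {r * a | r. True}"
    unfolding is_ideal_def
  proof (intro conjI ballI allI)
    show "0 \<in> {r * a | r. True}" by (auto intro: exI[of _ 0])
    fix x y assume "x \<in> {r * a | r. True}" "y \<in> {r * a | r. True}"
    then obtain r1 r2 where "x = r1 * a" "y = r2 * a" by auto
    then show "x + y \<in> {r * a | r. True}" by (auto intro: exI[of _ "r1 + r2"] simp: distrib_right)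
  next
    fix x r assume "x \<in> {r * a | r. True}"
    then obtain r1 where "x = r1 * a" by auto
    then show "r * x \<in> {r * a | r. True}" by (auto intro: exI[of _ "r * r1"] simp: mult.assoc)
  qed
  moreover have "{a} \<subseteq> {r * a | r. True}" by (auto intro: exI[of _ 1])
  ultimately show "ideal_gen {a} \<subseteq> {r * a | r. True}" by (rule ideal_gen_least)
  show "{r * a | r. True} \<subseteq> ideal_gen {a}"
  proof
    fix x assume "x \<in> {r * a | r. True}"
    then obtain r where "x = r * a" by blast
    moreover have "a \<in> ideal_gen {a}" using ideal_gen_sub[of "{a}"] by blast
    ultimately show "x \<in> ideal_gen {a}" using is_idealD(3)[OF is_ideal_ideal_gen] by blast
  qed
qed

lemma kernel_ideal: "rhom f \<Longrightarrow> is_ideal (kernel f)"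
  unfolding is_ideal_def kernel_def
proof (intro conjI ballI allI)
  assume f: "rhom f"
  show "0 \<in> {x. f x = 0}" using rhom_0[OF f] by simp
  fix x y assume "x \<in> {x. f x = 0}" "y \<in> {x. f x = 0}"
  then show "x + y \<in> {x. f x = 0}" using rhomD(2)[OF f, of x y] by simp
next
  fix x r assume f: "rhom f" and "x \<in> {x. f x = 0}"
  then show "r * x \<in> {x. f x = 0}" using rhomD(3)[OF f, of r x] by simp
qed

lemma is_ideal_pow: "is_ideal (ideal_pow I n)"
proof (cases n)
  case 0 then show ?thesis by (simp add: is_ideal_UNIV)
next
  case (Suc m) then show ?thesis by (simp only: ideal_pow.simps ideal_prod_def is_ideal_ideal_gen)
qed

lemma ideal_prod_mem: "x \<in> I \<Longrightarrow> y \<in> J \<Longrightarrow> x * y \<in> ideal_prod I J"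
proof -
  assume "x \<in> I" "y \<in> J"
  then have "x * y \<in> {x * y | x y. x \<in> I \<and> y \<in> J}" by blast
  then show ?thesis unfolding ideal_prod_def using ideal_gen_sub by (rule subsetD[rotated])
qed

lemma ideal_prod_sub: "is_ideal J \<Longrightarrow> ideal_prod I J \<subseteq> J"
  unfolding ideal_prod_def by (rule ideal_gen_least) (auto intro: is_idealD(3))

lemma ideal_pow_Suc_sub: "ideal_pow I (Suc n) \<subseteq> ideal_pow I n"
  by (simp add: ideal_prod_sub is_ideal_pow)

lemma ideal_pow_antimono: "m \<le> n \<Longrightarrow> ideal_pow I n \<subseteq> ideal_pow I m"
proof (induction n rule: dec_induct)
  case base then show ?case by simp
next
  case (step k) then show ?case using ideal_pow_Suc_sub[of I k] by blast
qed

lemma power_in_ideal_pow: "x \<in> I \<Longrightarrow> x ^ n * r \<in> ideal_pow I n"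
proof (induction n arbitrary: r)
  case 0 then show ?case by simp
next
  case (Suc n)
  have "x * (x ^ n * r) \<in> ideal_pow I (Suc n)"
    using ideal_prod_mem[OF Suc.prems Suc.IH[OF Suc.prems]] by simp
  then show ?case by (simp add: mult.assoc)
qed

lemma power_in_ideal_pow': "x \<in> I \<Longrightarrow> m \<le> n \<Longrightarrow> x ^ n * r \<in> ideal_pow I m"
  using power_in_ideal_pow ideal_pow_antimono by blast


section \<open>One-variable substitution into a complete ring\<close>

definition Esum :: "('a::comm_ring_1 \<Rightarrow> 's::comm_ring_1) \<Rightarrow> 's \<Rightarrow> 'a fps \<Rightarrow> nat \<Rightarrow> 's" where
  "Esum \<psi> y f N = (\<Sum>n<N. \<psi> (f $ n) * y^n)"

definition convto :: "'s::comm_ring_1 set \<Rightarrow> ('a::comm_ring_1 \<Rightarrow> 's) \<Rightarrow> 's \<Rightarrow> 'a fps \<Rightarrow> 's \<Rightarrow> bool" where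
  "convto I \<psi> y f l \<longleftrightarrow> (\<forall>N. l - Esum \<psi> y f N \<in> ideal_pow I N)"

lemma sep_zero: assumes "adic_complete I" "\<And>N. z \<in> ideal_pow I N" shows "z = 0"
proof -
  have "z \<in> (\<Inter>n. ideal_pow I n)" using assms(2) by blast
  then show ?thesis using assms(1) unfolding adic_complete_def by blast
qed

lemma convto_unique:
  assumes "adic_complete I" "convto I \<psi> y f l" "convto I \<psi> y f l'"
  shows "l = l'"
proof -
  have "l - l' = 0"
  proof (rule sep_zero[OF assms(1)])
    fix N
    have "(l - Esum \<psi> y f N) - (l' - Esum \<psi> y f N) \<in> ideal_pow I N"
      using assms(2,3) unfolding convto_def by (blast intro: ideal_diff is_ideal_pow)
    then show "l - l' \<in> ideal_pow I N" by simp
  qed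
  then show ?thesis by simp
qed

lemma convto_exists:
  assumes "adic_complete I" "y \<in> I"
  shows "\<exists>l. convto I \<psi> y f l"
proof -
  have "\<forall>n. Esum \<psi> y f (Suc n) - Esum \<psi> y f n \<in> ideal_pow I n"
  proof
    fix n
    have "y ^ n * \<psi> (f $ n) \<in> ideal_pow I n" by (rule power_in_ideal_pow[OF assms(2)])
    then show "Esum \<psi> y f (Suc n) - Esum \<psi> y f n \<in> ideal_pow I n"
      by (simp add: Esum_def mult.commute)
  qed
  then obtain l where "\<forall>n. l - Esum \<psi> y f n \<in> ideal_pow I n"
    using assms(1) unfolding adic_complete_def by blast
  then show ?thesis unfolding convto_def by blast
qed

definition fsubst :: "'s::comm_ring_1 set \<Rightarrow> ('a::comm_ring_1 \<Rightarrow> 's) \<Rightarrow> 's \<Rightarrow> 'a fps \<Rightarrow> 's" where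
  "fsubst I \<psi> y f = (SOME l. convto I \<psi> y f l)"

lemma fsubst_conv: assumes "adic_complete I" "y \<in> I"
  shows "convto I \<psi> y f (fsubst I \<psi> y f)"
  unfolding fsubst_def using convto_exists[OF assms] by (rule someI_ex)

lemma fsubst_eq: assumes "adic_complete I" "y \<in> I" "convto I \<psi> y f l"
  shows "fsubst I \<psi> y f = l"
  using convto_unique[OF assms(1) fsubst_conv[OF assms(1,2)] assms(3)] .

lemma Esum_add: assumes "rhom \<psi>" shows "Esum \<psi> y (f + g) N = Esum \<psi> y f N + Esum \<psi> y g N"
  unfolding Esum_def by (simp add: rhomD[OF assms] distrib_right sum.distrib)

lemma Esum_const: assumes "rhom \<psi>" shows "Esum \<psi> y (fps_const r) N = (if N = 0 then 0 else \<psi> r)"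
proof (cases N)
  case 0 then show ?thesis by (simp add: Esum_def)
next
  case (Suc M)
  have "Esum \<psi> y (fps_const r) N = \<psi> (fps_const r $ 0) * y ^ 0 + (\<Sum>n<M. \<psi> (fps_const r $ Suc n) * y ^ Suc n)"
    unfolding Esum_def Suc by (rule sum.lessThan_Suc_shift)
  also have "\<dots> = \<psi> r" by (simp add: rhom_0[OF assms])
  finally show ?thesis using Suc by simp
qed

lemma Esum_X: assumes "rhom \<psi>" shows "Esum \<psi> y fps_X N = (if N \<le> 1 then 0 else y)"
proof (cases N)
  case 0 then show ?thesis by (simp add: Esum_def)
next
  case (Suc M)
  have "Esum \<psi> y fps_X N = \<psi> (fps_X $ 0) * y ^ 0 + (\<Sum>n<M. \<psi> (fps_X $ Suc n) * y ^ Suc n)"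
    unfolding Esum_def Suc by (rule sum.lessThan_Suc_shift)
  also have "\<dots> = (\<Sum>n<M. \<psi> (fps_X $ Suc n) * y ^ Suc n)" by (simp add: rhom_0[OF assms])
  also have "\<dots> = (if M = 0 then 0 else y)"
  proof (cases M)
    case 0 then show ?thesis by simp
  next
    case (Suc K)
    have "(\<Sum>n<M. \<psi> (fps_X $ Suc n) * y ^ Suc n) = \<psi> (fps_X $ Suc 0) * y ^ Suc 0 + (\<Sum>n<K. \<psi> (fps_X $ Suc (Suc n)) * y ^ Suc (Suc n))"
      unfolding Suc by (rule sum.lessThan_Suc_shift)
    also have "\<dots> = y" by (simp add: rhom_0[OF assms] rhomD(1)[OF assms])
    finally show ?thesis using Suc by simp
  qed
  finally show ?thesis using Suc by simp
qed

lemma Esum_mult: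
  assumes "rhom \<psi>" "y \<in> I"
  shows "Esum \<psi> y f N * Esum \<psi> y g N - Esum \<psi> y (f * g) N \<in> ideal_pow I N"
proof -
  define c where "c = (\<lambda>i j. \<psi> (f $ i) * y^i * (\<psi> (g $ j) * y^j))"
  define Tri where "Tri = {(i,j). i + j < N}"
  define Sq where "Sq = {..<N} \<times> {..<N}"
  have fin: "finite Sq" unfolding Sq_def by simp
  have sub: "Tri \<subseteq> Sq" unfolding Tri_def Sq_def by auto
  have "Esum \<psi> y (f * g) N = (\<Sum>n<N. \<Sum>i\<le>n. c i (n - i))"
  proof (unfold Esum_def, rule sum.cong[OF refl])
    fix n
    have "\<psi> ((f * g) $ n) * y ^ n = (\<Sum>i\<le>n. \<psi> (f $ i) * \<psi> (g $ (n-i))) * y ^ n"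
      by (simp add: fps_mult_nth rhom_sum[OF assms(1)] rhomD(3)[OF assms(1)] atLeast0AtMost)
    also have "\<dots> = (\<Sum>i\<le>n. \<psi> (f $ i) * \<psi> (g $ (n-i)) * y ^ n)" by (simp add: sum_distrib_right)
    also have "\<dots> = (\<Sum>i\<le>n. c i (n - i))"
    proof (rule sum.cong[OF refl])
      fix i assume "i \<in> {..n}"
      then have "y ^ n = y ^ i * y ^ (n - i)" by (simp add: power_add[symmetric])
      then show "\<psi> (f $ i) * \<psi> (g $ (n-i)) * y ^ n = c i (n - i)" unfolding c_def by (simp add: ac_simps)
    qed
    finally show "\<psi> ((f * g) $ n) * y ^ n = (\<Sum>i\<le>n. c i (n - i))" .
  qed
  also have "\<dots> = (\<Sum>(i,j)\<in>Tri. c i j)" unfolding Tri_def by (rule sum.triangle_reindex[symmetric])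
  finally have e1: "Esum \<psi> y (f * g) N = (\<Sum>(i,j)\<in>Tri. c i j)" .
  have e2: "Esum \<psi> y f N * Esum \<psi> y g N = (\<Sum>(i,j)\<in>Sq. c i j)"
    unfolding Esum_def Sq_def c_def by (simp add: sum_product sum.cartesian_product)
  have "(\<Sum>(i,j)\<in>Sq. c i j) = (\<Sum>(i,j)\<in>Sq - Tri. c i j) + (\<Sum>(i,j)\<in>Tri. c i j)"
    by (rule sum.subset_diff[OF sub fin])
  then have "Esum \<psi> y f N * Esum \<psi> y g N - Esum \<psi> y (f * g) N = (\<Sum>(i,j)\<in>Sq - Tri. c i j)"
    using e1 e2 by simp
  also have "\<dots> \<in> ideal_pow I N"
  proof (rule ideal_sum[OF is_ideal_pow])
    fix p assume "p \<in> Sq - Tri"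
    then obtain i j where p: "p = (i, j)" "N \<le> i + j" unfolding Tri_def by (cases p) (auto simp: not_less)
    have "y ^ (i + j) * (\<psi> (f $ i) * \<psi> (g $ j)) \<in> ideal_pow I N"
      by (rule power_in_ideal_pow'[OF assms(2) p(2)])
    then show "(case p of (i, j) \<Rightarrow> c i j) \<in> ideal_pow I N"
      unfolding p c_def by (simp add: power_add ac_simps)
  qed
  finally show ?thesis .
qed

lemma fsubst_hom:
  assumes "rhom \<psi>" "adic_complete I" "y \<in> I"
  shows "rhom (fsubst I \<psi> y)" "\<And>r. fsubst I \<psi> y (fps_const r) = \<psi> r" "fsubst I \<psi> y fps_X = y"
proof -
  let ?P = "fsubst I \<psi> y"
  have cv: "\<And>f N. ?P f - Esum \<psi> y f N \<in> ideal_pow I N"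
    using fsubst_conv[OF assms(2,3)] unfolding convto_def by blast
  have const: "?P (fps_const r) = \<psi> r" for r
  proof (rule fsubst_eq[OF assms(2,3)], unfold convto_def, intro allI)
    fix N show "\<psi> r - Esum \<psi> y (fps_const r) N \<in> ideal_pow I N"
      by (cases "N = 0") (simp_all add: Esum_const[OF assms(1)] is_idealD(1)[OF is_ideal_pow])
  qed
  then show "\<And>r. ?P (fps_const r) = \<psi> r" .
  show "?P fps_X = y"
  proof (rule fsubst_eq[OF assms(2,3)], unfold convto_def, intro allI)
    fix N show "y - Esum \<psi> y fps_X N \<in> ideal_pow I N"
    proof (cases "N \<le> 1")
      case True
      have "y ^ 1 * 1 \<in> ideal_pow I N" by (rule power_in_ideal_pow'[OF assms(3) True])
      then show ?thesis using True by (simp add: Esum_X[OF assms(1)])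
    next
      case False then show ?thesis by (simp add: Esum_X[OF assms(1)] is_idealD(1)[OF is_ideal_pow])
    qed
  qed
  have one: "?P 1 = 1" using const[of 1] by (simp add: rhomD(1)[OF assms(1)])
  have add: "?P (f + g) = ?P f + ?P g" for f g
  proof (rule fsubst_eq[OF assms(2,3)], unfold convto_def, intro allI)
    fix N
    have "(?P f - Esum \<psi> y f N) + (?P g - Esum \<psi> y g N) \<in> ideal_pow I N"
      by (rule is_idealD(2)[OF is_ideal_pow cv cv])
    then show "?P f + ?P g - Esum \<psi> y (f + g) N \<in> ideal_pow I N"
      by (simp add: Esum_add[OF assms(1)] algebra_simps)
  qed
  have mult: "?P (f * g) = ?P f * ?P g" for f g
  proof (rule fsubst_eq[OF assms(2,3)], unfold convto_def, intro allI)
    fix N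
    have a: "(?P f - Esum \<psi> y f N) * ?P g \<in> ideal_pow I N"
      by (rule ideal_mult_right[OF is_ideal_pow cv])
    have b: "Esum \<psi> y f N * (?P g - Esum \<psi> y g N) \<in> ideal_pow I N"
      by (rule is_idealD(3)[OF is_ideal_pow cv])
    have c: "Esum \<psi> y f N * Esum \<psi> y g N - Esum \<psi> y (f * g) N \<in> ideal_pow I N"
      by (rule Esum_mult[OF assms(1,3)])
    have "(?P f - Esum \<psi> y f N) * ?P g + Esum \<psi> y f N * (?P g - Esum \<psi> y g N)
          + (Esum \<psi> y f N * Esum \<psi> y g N - Esum \<psi> y (f * g) N) \<in> ideal_pow I N"
      by (rule is_idealD(2)[OF is_ideal_pow is_idealD(2)[OF is_ideal_pow a b] c])
    then show "?P f * ?P g - Esum \<psi> y (f * g) N \<in> ideal_pow I N"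
      by (simp add: algebra_simps)
  qed
  show "rhom ?P" unfolding rhom_def using one add mult by blast
qed

lemma fps_hom_exists:
  assumes "rhom \<psi>" "adic_complete I" "y \<in> I"
  shows "\<exists>\<Psi> :: 'a::comm_ring_1 fps \<Rightarrow> 's::comm_ring_1. rhom \<Psi> \<and> (\<forall>r. \<Psi> (fps_const r) = \<psi> r) \<and> \<Psi> fps_X = y"
  using fsubst_hom[OF assms] by blast

lemma fps_cutoff_sum: "fps_cutoff N f = (\<Sum>i<N. fps_const (f $ i) * fps_X^i)"
proof (rule fps_ext)
  fix n
  have "(\<Sum>i<N. fps_const (f $ i) * fps_X^i) $ n = (\<Sum>i<N. if n = i then f $ i else 0)"
    unfolding fps_sum_nth by (rule sum.cong) auto
  also have "\<dots> = (if n < N then f $ n else 0)" by (simp add: sum.delta)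
  finally show "fps_cutoff N f $ n = (\<Sum>i<N. fps_const (f $ i) * fps_X^i) $ n" by simp
qed

lemma fps_hom_unique:
  fixes \<Psi>1 \<Psi>2 :: "'a::comm_ring_1 fps \<Rightarrow> 's::comm_ring_1"
  assumes "rhom \<Psi>1" "rhom \<Psi>2" "\<And>r. \<Psi>1 (fps_const r) = \<Psi>2 (fps_const r)"
    "\<Psi>1 fps_X = \<Psi>2 fps_X" "\<Psi>1 fps_X \<in> I" "adic_complete I"
  shows "\<Psi>1 = \<Psi>2"
proof
  fix f
  let ?y = "\<Psi>1 fps_X"
  have "\<Psi>1 f - \<Psi>2 f = 0"
  proof (rule sep_zero[OF assms(6)])
    fix N
    have dec: "f = fps_X^N * fps_shift N f + fps_cutoff N f" using fps_shift_cutoff'[of N f] by simp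
    have cut: "\<Psi>1 (fps_cutoff N f) = \<Psi>2 (fps_cutoff N f)"
      unfolding fps_cutoff_sum
      by (simp add: rhom_sum[OF assms(1)] rhom_sum[OF assms(2)] rhomD(3)[OF assms(1)] rhomD(3)[OF assms(2)]
          rhom_power[OF assms(1)] rhom_power[OF assms(2)] assms(3,4))
    have e1: "\<Psi>1 f = ?y ^ N * \<Psi>1 (fps_shift N f) + \<Psi>1 (fps_cutoff N f)"
      by (subst dec) (simp add: rhomD(2,3)[OF assms(1)] rhom_power[OF assms(1)])
    have e2: "\<Psi>2 f = ?y ^ N * \<Psi>2 (fps_shift N f) + \<Psi>1 (fps_cutoff N f)"
      by (subst dec) (simp add: rhomD(2,3)[OF assms(2)] rhom_power[OF assms(2)] assms(4) cut)
    have "?y ^ N * (\<Psi>1 (fps_shift N f) - \<Psi>2 (fps_shift N f)) \<in> ideal_pow I N"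
      by (rule power_in_ideal_pow[OF assms(5)])
    then show "\<Psi>1 f - \<Psi>2 f \<in> ideal_pow I N" using e1 e2 by (simp add: algebra_simps)
  qed
  then show "\<Psi>1 f = \<Psi>2 f" by simp
qed


section \<open>Two variables\<close>

lemma rhom_fps_const: "rhom (fps_const :: 'a::comm_ring_1 \<Rightarrow> 'a fps)"
  unfolding rhom_def by (simp add: fps_const_add fps_const_mult)

lemma rhom_C2: "rhom (C2 :: 'a::comm_ring_1 \<Rightarrow> 'a fps fps)"
  unfolding rhom_def C2_def by (simp add: fps_const_add fps_const_mult)

lemma C2_0 [simp]: "C2 0 = 0" unfolding C2_def by simp

lemma fps2_hom_exists:
  fixes \<psi> :: "'a::comm_ring_1 \<Rightarrow> 's::comm_ring_1"
  assumes "rhom \<psi>" "adic_complete I" "x \<in> I" "y \<in> I"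
  shows "\<exists>\<Phi> :: 'a fps fps \<Rightarrow> 's. rhom \<Phi> \<and> (\<forall>r. \<Phi> (C2 r) = \<psi> r) \<and> \<Phi> X2 = x \<and> \<Phi> Y2 = y"
proof -
  obtain \<Psi>1 :: "'a fps \<Rightarrow> 's" where h1: "rhom \<Psi>1" "\<forall>r. \<Psi>1 (fps_const r) = \<psi> r" "\<Psi>1 fps_X = x"
    using fps_hom_exists[OF assms(1,2,3)] by blast
  obtain \<Psi>2 :: "'a fps fps \<Rightarrow> 's" where h2: "rhom \<Psi>2" "\<forall>r. \<Psi>2 (fps_const r) = \<Psi>1 r" "\<Psi>2 fps_X = y"
    using fps_hom_exists[OF h1(1) assms(2,4)] by blast
  have "\<forall>r. \<Psi>2 (C2 r) = \<psi> r" using h1 h2 unfolding C2_def by simp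
  moreover have "\<Psi>2 X2 = x" using h1 h2 unfolding X2_def by simp
  moreover have "\<Psi>2 Y2 = y" using h2 unfolding Y2_def by simp
  ultimately show ?thesis using h2(1) by blast
qed

lemma fps2_hom_unique:
  fixes \<Phi>1 \<Phi>2 :: "'a::comm_ring_1 fps fps \<Rightarrow> 's::comm_ring_1"
  assumes "rhom \<Phi>1" "rhom \<Phi>2" "\<And>r. \<Phi>1 (C2 r) = \<Phi>2 (C2 r)"
    "\<Phi>1 X2 = \<Phi>2 X2" "\<Phi>1 Y2 = \<Phi>2 Y2" "\<Phi>1 X2 \<in> I" "\<Phi>1 Y2 \<in> I" "adic_complete I"
  shows "\<Phi>1 = \<Phi>2"
proof -
  have i1: "rhom (\<Phi>1 \<circ> fps_const)" "rhom (\<Phi>2 \<circ> fps_const)"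
    using rhom_comp[OF assms(1) rhom_fps_const] rhom_comp[OF assms(2) rhom_fps_const] by auto
  have "\<Phi>1 \<circ> fps_const = \<Phi>2 \<circ> fps_const"
    by (rule fps_hom_unique[OF i1, of I]) (use assms in \<open>simp_all add: C2_def X2_def\<close>)
  then have c: "\<Phi>1 (fps_const g) = \<Phi>2 (fps_const g)" for g by (metis comp_apply)
  show ?thesis
    by (rule fps_hom_unique[OF assms(1,2) c, of I]) (use assms in \<open>simp_all add: Y2_def\<close>)
qed

section \<open>Coefficientwise maps\<close>

definition fmap :: "('a \<Rightarrow> 'b) \<Rightarrow> 'a fps \<Rightarrow> 'b fps" where
  "fmap g f = Abs_fps (\<lambda>n. g (f $ n))"

lemma fmap_nth [simp]: "fmap g f $ n = g (f $ n)"
  unfolding fmap_def by simp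

lemma rhom_fmap: assumes "rhom g" shows "rhom (fmap g)"
  unfolding rhom_def
proof (intro conjI allI)
  show "fmap g 1 = 1" by (rule fps_ext) (simp add: rhom_0[OF assms] rhomD(1)[OF assms])
  fix x y
  show "fmap g (x + y) = fmap g x + fmap g y" by (rule fps_ext) (simp add: rhomD(2)[OF assms])
  show "fmap g (x * y) = fmap g x * fmap g y"
    by (rule fps_ext) (simp add: fps_mult_nth rhom_sum[OF assms] rhomD(3)[OF assms])
qed

lemma fmap_const [simp]: assumes "rhom g" shows "fmap g (fps_const r) = fps_const (g r)"
  by (rule fps_ext) (simp add: rhom_0[OF assms])

lemma fmap_X [simp]: assumes "rhom g" shows "fmap g fps_X = fps_X"
  by (rule fps_ext) (simp add: rhom_0[OF assms] rhomD(1)[OF assms] fps_X_nth)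

lemma fmap_surj: assumes "surj g" shows "surj (fmap g)"
proof (rule surjI[of _ "fmap (inv g)"])
  fix f show "fmap g (fmap (inv g) f) = f"
    by (rule fps_ext) (simp add: surj_f_inv_f[OF assms])
qed

definition fmap2 :: "('a \<Rightarrow> 'b) \<Rightarrow> 'a fps fps \<Rightarrow> 'b fps fps" where
  "fmap2 g = fmap (fmap g)"

lemma rhom_fmap2: "rhom g \<Longrightarrow> rhom (fmap2 g)"
  unfolding fmap2_def by (intro rhom_fmap)

lemma fmap2_nth [simp]: "fmap2 g F $ j $ i = g (F $ j $ i)"
  unfolding fmap2_def by simp

lemma fmap2_C2 [simp]: "rhom g \<Longrightarrow> fmap2 g (C2 r) = C2 (g r)"
  unfolding fmap2_def C2_def by (simp add: rhom_fmap)

lemma fmap2_X2 [simp]: "rhom g \<Longrightarrow> fmap2 g X2 = X2"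
  unfolding fmap2_def X2_def by (simp add: rhom_fmap)

lemma fmap2_Y2 [simp]: "rhom g \<Longrightarrow> fmap2 g Y2 = Y2"
  unfolding fmap2_def Y2_def by (simp add: rhom_fmap)

lemma fmap2_surj: "surj g \<Longrightarrow> surj (fmap2 g)"
  unfolding fmap2_def by (intro fmap_surj)

lemma C2_mult_nth [simp]: "(C2 c * F) $ j $ i = c * F $ j $ i"
  unfolding C2_def by simp

lemma fmap2_kernel:
  assumes "rhom g" "kernel g = {r * \<tau> | r. True}" "fmap2 g F = 0"
  shows "\<exists>H. F = C2 \<tau> * H"
proof -
  have "\<forall>j i. \<exists>c. F $ j $ i = c * \<tau>"
  proof (intro allI)
    fix j i
    have "g (F $ j $ i) = fmap2 g F $ j $ i" by simp
    also have "\<dots> = 0" using assms(3) by simp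
    finally have "F $ j $ i \<in> kernel g" unfolding kernel_def by simp
    then show "\<exists>c. F $ j $ i = c * \<tau>" using assms(2) by blast
  qed
  then obtain c where c: "\<And>j i. F $ j $ i = c j i * \<tau>" by metis
  define H where "H = Abs_fps (\<lambda>j. Abs_fps (\<lambda>i. c j i))"
  have "F = C2 \<tau> * H"
    by (rule fps_ext, rule fps_ext) (simp add: H_def c mult.commute)
  then show ?thesis by blast
qed

lemma image_ideal: assumes "rhom f" "surj f" "is_ideal J" shows "is_ideal (f ` J)"
  unfolding is_ideal_def
proof (intro conjI ballI allI)
  show "0 \<in> f ` J" using rhom_0[OF assms(1)] is_idealD(1)[OF assms(3)] by (metis image_eqI)
  fix x y assume "x \<in> f ` J" "y \<in> f ` J"
  then obtain a b where "a \<in> J" "b \<in> J" "x = f a" "y = f b" by blast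
  then show "x + y \<in> f ` J" using rhomD(2)[OF assms(1), of a b] is_idealD(2)[OF assms(3)] by (metis image_eqI)
next
  fix x r assume "x \<in> f ` J"
  then obtain a where "a \<in> J" "x = f a" by blast
  moreover obtain b where "r = f b" using assms(2) by (metis surjD)
  ultimately show "r * x \<in> f ` J" using rhomD(3)[OF assms(1), of b a] is_idealD(3)[OF assms(3)] by (metis image_eqI)
qed

lemma qform_perturb:
  fixes T :: "'a::comm_ring_1"
  assumes "T * T = 0" "T * S1 = 0" "T * S2 = 0"
  shows "qform G E (x0 + T * a) (y0 + T * b) - qform G E (S1 + T * A) (S2 + T * B) =
    (qform G E x0 y0 - qform G E S1 S2) + T * (a * (2 * x0 + G * y0) + b * (G * x0 + 2 * E * y0))"
proof -
  have "qform G E (x0 + T * a) (y0 + T * b) - qform G E (S1 + T * A) (S2 + T * B) =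
    (qform G E x0 y0 - qform G E S1 S2) + T * (a * (2 * x0 + G * y0) + b * (G * x0 + 2 * E * y0))
    + (T * T) * (a * a + G * a * b + E * b * b - A * A - G * A * B - E * B * B)
    - (T * S1) * (2 * A + G * B) - (T * S2) * (G * A + 2 * E * B)"
    unfolding qform_def power2_eq_square by (simp add: algebra_simps)
  then show ?thesis using assms by simp
qed


lemma fps2_decomp:
  fixes F :: "'a::comm_ring_1 fps fps"
  assumes "F $ 0 $ 0 = 0"
  shows "F = X2 * fps_const (fps_shift 1 (F $ 0)) + Y2 * fps_shift 1 F"
proof (rule fps_ext, rule fps_ext)
  fix j i
  show "F $ j $ i = (X2 * fps_const (fps_shift 1 (F $ 0)) + Y2 * fps_shift 1 F) $ j $ i"
    using assms by (cases j; cases i) (simp_all add: X2_def Y2_def fps_X_mult_nth)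
qed

lemma R0_solve:
  fixes pi0 :: "'k::field fps fps \<Rightarrow> 'z::comm_ring_1"
  assumes R0: "R0_data g d pi0 D0" and w0: "D0 w0 = 0"
  shows "\<exists>c1 c2. w0 + c1 * (2 * pi0 X2 + pi0 (C2 g) * pi0 Y2)
                  + c2 * (pi0 (C2 g) * pi0 X2 + 2 * pi0 (C2 d) * pi0 Y2) = 0"
proof -
  have disc: "g^2 - 4 * d \<noteq> 0" and hp: "rhom pi0" and sp: "surj pi0"
    and D0p: "D0 \<circ> pi0 = (\<lambda>f. f $ 0 $ 0)"
    using R0 unfolding R0_data_def by auto
  obtain F where F: "w0 = pi0 F" using sp by (metis surjD)
  have "F $ 0 $ 0 = D0 (pi0 F)" using fun_cong[OF D0p, of F] by simp
  then have F00: "F $ 0 $ 0 = 0" using w0 F by simp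
  define P where "P = pi0 (fps_const (fps_shift 1 (F $ 0)))"
  define Q where "Q = pi0 (fps_shift 1 F)"
  define u where "u = pi0 X2"
  define v where "v = pi0 Y2"
  define \<kappa> where "\<kappa> = (\<lambda>c. pi0 (C2 c))"
  have k: "rhom \<kappa>" unfolding \<kappa>_def using rhom_comp[OF hp rhom_C2] by (simp add: comp_def)
  have wPQ: "w0 = P * u + Q * v"
    unfolding F P_def Q_def u_def v_def
    by (subst fps2_decomp[OF F00]) (simp add: rhomD[OF hp] mult.commute)
  define \<Delta> where "\<Delta> = 4 * d - g^2"
  have D: "\<Delta> \<noteq> 0" using disc unfolding \<Delta>_def by (metis eq_iff_diff_eq_0)
  define e where "e = \<kappa> (1 / \<Delta>)"
  have kD: "\<kappa> \<Delta> = 4 * \<kappa> d - (\<kappa> g)^2"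
    unfolding \<Delta>_def by (simp add: rhom_diff[OF k] rhomD[OF k] rhom_power[OF k] rhom_numeral[OF k])
  have "e * \<kappa> \<Delta> = \<kappa> (1 / \<Delta> * \<Delta>)" unfolding e_def by (rule rhomD(3)[OF k, symmetric])
  also have "\<dots> = 1" using D by (simp add: rhomD[OF k])
  finally have eD: "e * (4 * \<kappa> d - (\<kappa> g)^2) = 1" using kD by simp
  define c1 where "c1 = - (e * (P * (2 * \<kappa> d) - Q * \<kappa> g))"
  define c2 where "c2 = - (e * (Q * 2 - P * \<kappa> g))"
  have "w0 + c1 * (2 * u + \<kappa> g * v) + c2 * (\<kappa> g * u + 2 * \<kappa> d * v)
      = (P * u + Q * v) * (1 - e * (4 * \<kappa> d - (\<kappa> g)^2))"
    unfolding wPQ c1_def c2_def power2_eq_square by (simp add: algebra_simps)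
  also have "\<dots> = 0" using eD by simp
  finally show ?thesis unfolding u_def v_def \<kappa>_def by blast
qed


lemma local_ring_ideal: "local_ring TYPE('a::comm_ring_1) \<Longrightarrow> is_ideal (nonunits :: 'a set)"
  unfolding local_ring_def by simp

lemma nonunitsI: "\<not> x dvd 1 \<Longrightarrow> x \<in> nonunits" unfolding nonunits_def by simp
lemma nonunitsD: "x \<in> nonunits \<Longrightarrow> \<not> x dvd 1" unfolding nonunits_def by simp

theorem mainTheorem7:
  fixes resL :: "'l::comm_ring_1 \<Rightarrow> 'k::field"
    and g d :: 'k and gt dt :: 'l
    and pi0 :: "'k fps fps \<Rightarrow> 'z::comm_ring_1" and D0 :: "'z \<Rightarrow> 'k"
    and lamA :: "'l \<Rightarrow> 'a::comm_ring_1" and resA :: "'a \<Rightarrow> 'k"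
    and lamB :: "'l \<Rightarrow> 'b::comm_ring_1" and resB :: "'b \<Rightarrow> 'k"
    and gA :: "'b \<Rightarrow> 'a" and \<tau> :: 'b
    and iS :: "'b \<Rightarrow> 's::comm_ring_1" and DS :: "'s \<Rightarrow> 'b" and hS :: "'s \<Rightarrow> 'z"
    and iR :: "'a \<Rightarrow> 'r::comm_ring_1" and DR :: "'r \<Rightarrow> 'a" and hR :: "'r \<Rightarrow> 'z"
    and gR :: "'s \<Rightarrow> 'r"
  assumes base: "base_ring resL"
    and lifts: "resL gt = g" "resL dt = d"
    and R0: "R0_data g d pi0 D0"
    and CA: "C_obj resL lamA resA"
    and CB: "C_obj resL lamB resB"
    and gA_hom: "rhom gA" "local_hom gA" "gA \<circ> lamB = lamA" "resA \<circ> gA = resB"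
    and small: "surj gA" "kernel gA = ideal_gen {\<tau>}" "\<forall>m\<in>nonunits. \<tau> * m = 0"
    and FS: "F_obj pi0 D0 resB iS DS hS"
    and FR: "F_obj pi0 D0 resA iR DR hR"
    and gR_hom: "rhom gR" "local_hom gR" "gR \<circ> iS = iR \<circ> gA" "DR \<circ> gR = gA \<circ> DS" "hR \<circ> gR = hS"
    and base_change: "surj gR" "kernel gR = ideal_gen (iS ` kernel gA)"
    and planarR: "planar pi0 lamA gt dt iR DR hR"
  shows "planar pi0 lamB gt dt iS DS hS"
proof -
  have iS: "rhom iS" and locS: "local_ring TYPE('s)" and liS: "local_hom iS" and flat: "flat_alg iS"
    and complS: "adic_complete (nonunits :: 's set)" and DS: "rhom DS" and lDS: "local_hom DS"
    and DSiS: "DS \<circ> iS = id" and hS: "rhom hS" and hSiS: "hS \<circ> iS = pi0 \<circ> C2 \<circ> resB"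
    and shS: "surj hS" and khS: "kernel hS = ideal_gen (iS ` (nonunits :: 'b set))"
    using FS unfolding F_obj_def by auto
  have iR: "rhom iR" and locR: "local_ring TYPE('r)" and complR: "adic_complete (nonunits :: 'r set)"
    and DR: "rhom DR" and hR: "rhom hR"
    using FR unfolding F_obj_def by auto
  have resB: "residue_map resB" and resBlam: "resB \<circ> lamB = resL" and lamB: "rhom lamB"
    using CB unfolding C_obj_def by auto
  have resA: "residue_map resA" using CA unfolding C_obj_def by auto
  have hpi: "rhom pi0" using R0 unfolding R0_data_def by auto
  obtain sA tA and \<phi>A :: "'a fps fps \<Rightarrow> 'r" where
    sA: "sA \<in> nonunits" and tA: "tA \<in> nonunits" and \<phi>A: "rhom \<phi>A" and s\<phi>A: "surj \<phi>A"
    and k\<phi>A: "kernel \<phi>A = ideal_gen {qform (C2 (lamA gt)) (C2 (lamA dt)) X2 Y2 - C2 (qform (lamA gt) (lamA dt) sA tA)}"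
    and \<phi>AC: "\<phi>A \<circ> C2 = iR" and \<phi>AX: "DR (\<phi>A X2) = sA" and \<phi>AY: "DR (\<phi>A Y2) = tA"
    and h\<phi>AX: "hR (\<phi>A X2) = pi0 X2" and h\<phi>AY: "hR (\<phi>A Y2) = pi0 Y2"
    using planarR unfolding planar_def by blast
  define fA where "fA = qform (C2 (lamA gt)) (C2 (lamA dt)) X2 Y2 - C2 (qform (lamA gt) (lamA dt) sA tA)"
  have idS: "is_ideal (nonunits :: 's set)" by (rule local_ring_ideal[OF locS])
  have idR: "is_ideal (nonunits :: 'r set)" by (rule local_ring_ideal[OF locR])
  have mB: "(nonunits :: 'b set) = kernel resB" using resB unfolding residue_map_def by simp
  have resBh: "rhom resB" using resB unfolding residue_map_def by simp
  have idB: "is_ideal (nonunits :: 'b set)" unfolding mB by (rule kernel_ideal[OF resBh])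
  have resAh: "rhom resA" using resA unfolding residue_map_def by simp
  have iSC: "\<And>b. hS (iS b) = pi0 (C2 (resB b))" using hSiS by (metis comp_apply)
  have DSiS': "\<And>b. DS (iS b) = b" using DSiS by (metis comp_apply id_apply)
  have gRiS: "\<And>b. gR (iS b) = iR (gA b)" using gR_hom(3) by (metis comp_apply)
  have DRgR: "\<And>x. DR (gR x) = gA (DS x)" using gR_hom(4) by (metis comp_apply)
  have hRgR: "\<And>x. hR (gR x) = hS x" using gR_hom(5) by (metis comp_apply)
  have \<phi>AC': "\<And>b. \<phi>A (C2 b) = iR b" using \<phi>AC by (metis comp_apply)
  have gAlam: "\<And>l. gA (lamB l) = lamA l" using gA_hom(3) by (metis comp_apply)
  have resBlam': "\<And>l. resB (lamB l) = resL l" using resBlam by (metis comp_apply)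
  have ker\<tau>: "kernel gA = {r * \<tau> | r. True}" using small(2) ideal_gen_singleton by simp
  have gA\<tau>: "gA \<tau> = 0" using ker\<tau> unfolding kernel_def by (metis (mono_tags, lifting) mem_Collect_eq mult_1)
  have oneA: "(1::'a) \<noteq> 0"
  proof
    assume "(1::'a) = 0"
    then have "resA 1 = resA 0" by simp
    then show False using rhomD(1)[OF resAh] rhom_0[OF resAh] by simp
  qed
  have \<tau>nu: "\<tau> \<in> nonunits"
  proof (rule nonunitsI, rule notI)
    assume "\<tau> dvd 1"
    then obtain c where "1 = \<tau> * c" by (auto simp: dvd_def)
    then have "gA 1 = gA \<tau> * gA c" using rhomD(3)[OF gA_hom(1)] by metis
    then show False using gA\<tau> rhomD(1)[OF gA_hom(1)] oneA by simp
  qed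
  have \<tau>\<tau>: "\<tau> * \<tau> = 0" using small(3) \<tau>nu by blast
  define T where "T = iS \<tau>"
  have TT: "T * T = 0" unfolding T_def using \<tau>\<tau> by (metis rhomD(3)[OF iS] rhom_0[OF iS])
  have Tnu: "T \<in> nonunits" unfolding T_def using liS \<tau>nu unfolding local_hom_def nonunits_def by simp
  have gRT: "gR T = 0" unfolding T_def gRiS gA\<tau> by (rule rhom_0[OF iR])
  have res\<tau>: "resB \<tau> = 0" using \<tau>nu mB unfolding kernel_def by blast
  have hST: "hS T = 0" unfolding T_def iSC res\<tau> by (simp add: rhom_0[OF hpi])
  have kgR: "\<And>z. gR z = 0 \<Longrightarrow> \<exists>r. z = r * T"
  proof -
    fix z assume "gR z = 0"
    then have "z \<in> ideal_gen (iS ` kernel gA)" using base_change(2) unfolding kernel_def by blast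
    moreover have "ideal_gen (iS ` kernel gA) \<subseteq> {r * T | r. True}"
    proof (rule ideal_gen_least)
      show "is_ideal {r * T | r. True}" unfolding ideal_gen_singleton[symmetric] by (rule is_ideal_ideal_gen)
      show "iS ` kernel gA \<subseteq> {r * T | r. True}"
        unfolding ker\<tau> T_def using rhomD(3)[OF iS] by blast
    qed
    ultimately show "\<exists>r. z = r * T" by blast
  qed
  have annT: "\<And>z. z \<in> ideal_gen (iS ` (nonunits :: 'b set)) \<Longrightarrow> T * z = 0"
  proof -
    fix z assume z: "z \<in> ideal_gen (iS ` (nonunits :: 'b set))"
    have "ideal_gen (iS ` (nonunits :: 'b set)) \<subseteq> {z. T * z = 0}"
    proof (rule ideal_gen_least)
      show "is_ideal {z. T * z = 0}" unfolding is_ideal_def by (simp add: distrib_left mult.left_commute)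
      show "iS ` nonunits \<subseteq> {z. T * z = 0}"
        unfolding T_def using small(3) by (auto simp: rhomD(3)[OF iS, symmetric] rhom_0[OF iS])
    qed
    then show "T * z = 0" using z by blast
  qed
  have annT2: "\<And>z. T * z = 0 \<Longrightarrow> \<tau> \<noteq> 0 \<Longrightarrow> z \<in> ideal_gen (iS ` (nonunits :: 'b set))"
  proof -
    fix z assume Tz: "T * z = 0" and t0: "\<tau> \<noteq> 0"
    have "(\<Sum>i<1. iS ((\<lambda>_. \<tau>) i) * (\<lambda>_. z) i) = 0" using Tz unfolding T_def by simp
    from flat[unfolded flat_alg_def, rule_format, where n=1 and a="\<lambda>_. \<tau>" and x="\<lambda>_. z", OF this]
    obtain m and c :: "nat \<Rightarrow> nat \<Rightarrow> 'b" and y :: "nat \<Rightarrow> 's" where zs: "z = (\<Sum>j<m. iS (c 0 j) * y j)"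
      and c2: "\<forall>j<m. \<tau> * c 0 j = 0" by auto
    show "z \<in> ideal_gen (iS ` (nonunits :: 'b set))"
      unfolding zs
    proof (rule ideal_sum[OF is_ideal_ideal_gen])
      fix j assume "j \<in> {..<m}"
      then have "\<tau> * c 0 j = 0" using c2 by simp
      have "\<not> c 0 j dvd 1"
      proof
        assume "c 0 j dvd 1"
        then obtain u where u: "1 = c 0 j * u" by (auto simp: dvd_def)
        have "\<tau> = (\<tau> * c 0 j) * u" by (simp add: mult.assoc u[symmetric])
        then show False using t0 \<open>\<tau> * c 0 j = 0\<close> by simp
      qed
      then have "c 0 j \<in> nonunits" by (rule nonunitsI)
      then have "iS (c 0 j) \<in> ideal_gen (iS ` (nonunits :: 'b set))" using ideal_gen_sub by blast
      then show "iS (c 0 j) * y j \<in> ideal_gen (iS ` (nonunits :: 'b set))"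
        by (rule ideal_mult_right[OF is_ideal_ideal_gen])
    qed
  qed

  have resDS: "\<And>x. resB (DS x) = D0 (hS x)" using FS unfolding F_obj_def by (metis comp_apply)
  have lDS': "\<And>x. x \<in> nonunits \<Longrightarrow> DS x \<in> nonunits"
    using lDS unfolding local_hom_def nonunits_def by simp
  have \<phi>AXnu: "\<phi>A X2 \<in> nonunits"
  proof (rule nonunitsI, rule notI)
    assume "\<phi>A X2 dvd 1"
    then have "DR (\<phi>A X2) dvd 1" by (rule rhom_unit[OF DR])
    then show False using nonunitsD[OF sA] \<phi>AX by simp
  qed
  have \<phi>AYnu: "\<phi>A Y2 \<in> nonunits"
  proof (rule nonunitsI, rule notI)
    assume "\<phi>A Y2 dvd 1"
    then have "DR (\<phi>A Y2) dvd 1" by (rule rhom_unit[OF DR])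
    then show False using nonunitsD[OF tA] \<phi>AY by simp
  qed
  obtain x0 where x0: "gR x0 = \<phi>A X2" using base_change(1) by (metis surjD)
  obtain y0 where y0: "gR y0 = \<phi>A Y2" using base_change(1) by (metis surjD)
  have x0nu: "x0 \<in> nonunits"
  proof (rule nonunitsI, rule notI)
    assume "x0 dvd 1" then have "gR x0 dvd 1" by (rule rhom_unit[OF gR_hom(1)])
    then show False using nonunitsD[OF \<phi>AXnu] x0 by simp
  qed
  have y0nu: "y0 \<in> nonunits"
  proof (rule nonunitsI, rule notI)
    assume "y0 dvd 1" then have "gR y0 dvd 1" by (rule rhom_unit[OF gR_hom(1)])
    then show False using nonunitsD[OF \<phi>AYnu] y0 by simp
  qed
  define s' where "s' = DS x0"
  define t' where "t' = DS y0"
  have s'nu: "s' \<in> nonunits" unfolding s'_def by (rule lDS'[OF x0nu])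
  have t'nu: "t' \<in> nonunits" unfolding t'_def by (rule lDS'[OF y0nu])
  have gAs': "gA s' = sA" unfolding s'_def using DRgR[of x0] x0 \<phi>AX by simp
  have gAt': "gA t' = tA" unfolding t'_def using DRgR[of y0] y0 \<phi>AY by simp
  define gB where "gB = lamB gt"
  define dB where "dB = lamB dt"
  have gAgB: "gA gB = lamA gt" unfolding gB_def by (rule gAlam)
  have gAdB: "gA dB = lamA dt" unfolding dB_def by (rule gAlam)
  have fAker: "\<phi>A fA = 0"
  proof -
    have "fA \<in> kernel \<phi>A" unfolding k\<phi>A fA_def by (rule subsetD[OF ideal_gen_sub]) simp
    then show ?thesis unfolding kernel_def by simp
  qed
  have \<phi>AfA: "\<phi>A fA = qform (iR (lamA gt)) (iR (lamA dt)) (\<phi>A X2) (\<phi>A Y2) - iR (qform (lamA gt) (lamA dt) sA tA)"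
    unfolding fA_def by (simp add: rhom_diff[OF \<phi>A] rhom_qform[OF \<phi>A] \<phi>AC')
  define e where "e = qform (iS gB) (iS dB) x0 y0 - iS (qform gB dB s' t')"
  have "gR e = \<phi>A fA" unfolding e_def \<phi>AfA
    by (simp add: rhom_diff[OF gR_hom(1)] rhom_qform[OF gR_hom(1)] gRiS x0 y0 rhom_qform[OF gA_hom(1)]
        gAs' gAt' gAgB gAdB)
  then have "gR e = 0" using fAker by simp
  then obtain w where ew: "e = w * T" using kgR by blast
  have DST: "DS T = \<tau>" unfolding T_def by (rule DSiS')
  have "DS e = 0" unfolding e_def
    by (simp add: rhom_diff[OF DS] rhom_qform[OF DS] DSiS' s'_def t'_def)
  then have \<tau>w: "DS w * \<tau> = 0" unfolding ew rhomD(3)[OF DS] DST .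
  have hx0: "hS x0 = pi0 X2" using hRgR[of x0] x0 h\<phi>AX by simp
  have hy0: "hS y0 = pi0 Y2" using hRgR[of y0] y0 h\<phi>AY by simp
  have hgB: "hS (iS gB) = pi0 (C2 g)" unfolding iSC gB_def resBlam' lifts ..
  have hdB: "hS (iS dB) = pi0 (C2 d)" unfolding iSC dB_def resBlam' lifts ..
  have corr: "\<exists>a b. T * (w + a * (2 * x0 + iS gB * y0) + b * (iS gB * x0 + 2 * iS dB * y0)) = 0"
  proof (cases "\<tau> = 0")
    case True then have "T = 0" by (simp add: T_def rhom_0[OF iS])
    then show ?thesis by simp
  next
    case False
    have "\<not> DS w dvd 1"
    proof
      assume "DS w dvd 1"
      then obtain u where u: "1 = DS w * u" by (auto simp: dvd_def)
      have "\<tau> = \<tau> * (DS w * u)" using u by simp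
      also have "\<dots> = (DS w * \<tau>) * u" by (simp add: ac_simps)
      finally have "\<tau> = (DS w * \<tau>) * u" .
      then show False using False \<tau>w by simp
    qed
    then have "DS w \<in> kernel resB" using mB nonunitsI by blast
    then have D0w: "D0 (hS w) = 0" using resDS[of w] unfolding kernel_def by simp
    obtain c1 c2 where c12: "hS w + c1 * (2 * pi0 X2 + pi0 (C2 g) * pi0 Y2)
                  + c2 * (pi0 (C2 g) * pi0 X2 + 2 * pi0 (C2 d) * pi0 Y2) = 0"
      using R0_solve[OF R0 D0w] by blast
    obtain a where ha: "hS a = c1" using shS by (metis surjD)
    obtain b where hb: "hS b = c2" using shS by (metis surjD)
    have "hS (w + a * (2 * x0 + iS gB * y0) + b * (iS gB * x0 + 2 * iS dB * y0)) = 0"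
      using c12 by (simp add: rhomD[OF hS] rhom_numeral[OF hS] hx0 hy0 hgB hdB ha hb)
    then have "w + a * (2 * x0 + iS gB * y0) + b * (iS gB * x0 + 2 * iS dB * y0) \<in> ideal_gen (iS ` (nonunits :: 'b set))"
      using khS unfolding kernel_def by blast
    then show ?thesis using annT by blast
  qed
  then obtain a b where ab: "T * (w + a * (2 * x0 + iS gB * y0) + b * (iS gB * x0 + 2 * iS dB * y0)) = 0"
    by blast
  define x where "x = x0 + T * a"
  define y where "y = y0 + T * b"
  define s where "s = DS x"
  define t where "t = DS y"
  have sx: "iS s = iS s' + T * iS (DS a)"
    unfolding s_def x_def s'_def by (simp add: rhomD[OF DS] rhomD[OF iS] DSiS' T_def)
  have ty: "iS t = iS t' + T * iS (DS b)"
    unfolding t_def y_def t'_def by (simp add: rhomD[OF DS] rhomD[OF iS] DSiS' T_def)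
  have Ts': "T * iS s' = 0" unfolding T_def rhomD(3)[OF iS, symmetric] using small(3) s'nu by (simp add: rhom_0[OF iS])
  have Tt': "T * iS t' = 0" unfolding T_def rhomD(3)[OF iS, symmetric] using small(3) t'nu by (simp add: rhom_0[OF iS])
  have keyeq: "qform (iS gB) (iS dB) x y = iS (qform gB dB s t)"
  proof -
    have "qform (iS gB) (iS dB) x y - iS (qform gB dB s t)
        = qform (iS gB) (iS dB) (x0 + T * a) (y0 + T * b) - qform (iS gB) (iS dB) (iS s' + T * iS (DS a)) (iS t' + T * iS (DS b))"
      unfolding rhom_qform[OF iS] sx ty x_def y_def ..
    also have "\<dots> = e + T * (a * (2 * x0 + iS gB * y0) + b * (iS gB * x0 + 2 * iS dB * y0))"
      unfolding e_def rhom_qform[OF iS] by (rule qform_perturb[OF TT Ts' Tt'])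
    also have "\<dots> = T * (w + a * (2 * x0 + iS gB * y0) + b * (iS gB * x0 + 2 * iS dB * y0))"
      unfolding ew by (simp add: algebra_simps)
    also have "\<dots> = 0" by (rule ab)
    finally show ?thesis by simp
  qed
  have xnu: "x \<in> nonunits" unfolding x_def
    by (rule is_idealD(2)[OF idS x0nu ideal_mult_right[OF idS Tnu]])
  have ynu: "y \<in> nonunits" unfolding y_def
    by (rule is_idealD(2)[OF idS y0nu ideal_mult_right[OF idS Tnu]])
  have snu: "s \<in> nonunits" unfolding s_def by (rule lDS'[OF xnu])
  have tnu: "t \<in> nonunits" unfolding t_def by (rule lDS'[OF ynu])
  obtain \<phi>B :: "'b fps fps \<Rightarrow> 's" where \<phi>B: "rhom \<phi>B" and \<phi>BC: "\<And>r. \<phi>B (C2 r) = iS r"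
    and \<phi>BX: "\<phi>B X2 = x" and \<phi>BY: "\<phi>B Y2 = y"
    using fps2_hom_exists[OF iS complS xnu ynu] by blast

  define GA where "GA = fmap2 gA"
  have GA: "rhom GA" unfolding GA_def by (rule rhom_fmap2[OF gA_hom(1)])
  have sGA: "surj GA" unfolding GA_def by (rule fmap2_surj[OF small(1)])
  have GAC: "\<And>r. GA (C2 r) = C2 (gA r)" unfolding GA_def by (rule fmap2_C2[OF gA_hom(1)])
  have GAX: "GA X2 = X2" unfolding GA_def by (rule fmap2_X2[OF gA_hom(1)])
  have GAY: "GA Y2 = Y2" unfolding GA_def by (rule fmap2_Y2[OF gA_hom(1)])
  have gRx: "gR x = \<phi>A X2" unfolding x_def by (simp add: rhomD[OF gR_hom(1)] gRT x0)
  have gRy: "gR y = \<phi>A Y2" unfolding y_def by (simp add: rhomD[OF gR_hom(1)] gRT y0)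
  have gAs: "gA s = sA" unfolding s_def using DRgR[of x] gRx \<phi>AX by simp
  have gAt: "gA t = tA" unfolding t_def using DRgR[of y] gRy \<phi>AY by simp
  define fB where "fB = qform (C2 gB) (C2 dB) X2 Y2 - C2 (qform gB dB s t)"
  have GAfB: "GA fB = fA" unfolding fB_def fA_def
    by (simp add: rhom_diff[OF GA] rhom_qform[OF GA] GAC GAX GAY rhom_qform[OF gA_hom(1)] gAgB gAdB gAs gAt)
  have \<phi>BfB: "\<phi>B fB = 0" unfolding fB_def
    by (simp add: rhom_diff[OF \<phi>B] rhom_qform[OF \<phi>B] \<phi>BC \<phi>BX \<phi>BY keyeq)
  have comm: "gR \<circ> \<phi>B = \<phi>A \<circ> GA"
  proof (rule fps2_hom_unique[OF rhom_comp[OF gR_hom(1) \<phi>B] rhom_comp[OF \<phi>A GA], of nonunits])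
    show "\<And>r. (gR \<circ> \<phi>B) (C2 r) = (\<phi>A \<circ> GA) (C2 r)" by (simp add: \<phi>BC gRiS GAC \<phi>AC')
    show "(gR \<circ> \<phi>B) X2 = (\<phi>A \<circ> GA) X2" by (simp add: \<phi>BX gRx GAX)
    show "(gR \<circ> \<phi>B) Y2 = (\<phi>A \<circ> GA) Y2" by (simp add: \<phi>BY gRy GAY)
    show "(gR \<circ> \<phi>B) X2 \<in> nonunits" by (simp add: \<phi>BX gRx \<phi>AXnu)
    show "(gR \<circ> \<phi>B) Y2 \<in> nonunits" by (simp add: \<phi>BY gRy \<phi>AYnu)
    show "adic_complete (nonunits :: 'r set)" by (rule complR)
  qed
  have comm': "\<And>F. gR (\<phi>B F) = \<phi>A (GA F)" using comm by (metis comp_apply)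
  have kGA: "\<And>F. GA F = 0 \<Longrightarrow> \<exists>H. F = C2 \<tau> * H"
    unfolding GA_def by (rule fmap2_kernel[OF gA_hom(1) ker\<tau>])
  have step1: "\<And>k. \<phi>B k = 0 \<Longrightarrow> \<exists>c h. k = c * fB + C2 \<tau> * h"
  proof -
    fix k assume k0: "\<phi>B k = 0"
    have "\<phi>A (GA k) = 0" using comm'[of k] k0 rhom_0[OF gR_hom(1)] by simp
    then have "GA k \<in> ideal_gen {fA}" using k\<phi>A unfolding kernel_def fA_def by blast
    then obtain r where r: "GA k = r * fA" unfolding ideal_gen_singleton by blast
    obtain c where c: "r = GA c" using sGA by (metis surjD)
    have "GA (k - c * fB) = 0" by (simp add: rhom_diff[OF GA] rhomD(3)[OF GA] GAfB r c)
    then obtain h where "k - c * fB = C2 \<tau> * h" using kGA by blast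
    then have "k = c * fB + C2 \<tau> * h" by (simp add: algebra_simps)
    then show "\<exists>c h. k = c * fB + C2 \<tau> * h" by blast
  qed
  define GM where "GM = kernel (fmap2 resB)"
  have GMid: "is_ideal GM" unfolding GM_def by (rule kernel_ideal[OF rhom_fmap2[OF resBh]])
  have GMann: "\<And>m. m \<in> GM \<Longrightarrow> C2 \<tau> * m = 0"
  proof -
    fix m assume "m \<in> GM"
    then have m0: "fmap2 resB m = 0" unfolding GM_def kernel_def by simp
    show "C2 \<tau> * m = 0"
    proof (rule fps_ext, rule fps_ext)
      fix j i
      have "resB (m $ j $ i) = fmap2 resB m $ j $ i" by simp
      then have "resB (m $ j $ i) = 0" using m0 by simp
      then have "m $ j $ i \<in> kernel resB" unfolding kernel_def by simp
      then have "m $ j $ i \<in> nonunits" using mB by blast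
      then show "(C2 \<tau> * m) $ j $ i = 0 $ j $ i" using small(3) by simp
    qed
  qed
  have C2GM: "\<And>r. r \<in> nonunits \<Longrightarrow> C2 r \<in> GM"
  proof -
    fix r :: 'b assume "r \<in> nonunits"
    then have "resB r = 0" using mB unfolding kernel_def by blast
    then show "C2 r \<in> GM" unfolding GM_def kernel_def by (simp add: fmap2_C2[OF resBh])
  qed
  have s\<phi>B: "surj \<phi>B"
  proof -
    have pre: "\<And>z. \<exists>p r. z = \<phi>B p + r * T"
    proof -
      fix z
      obtain p where p: "gR z = \<phi>A p" using s\<phi>A by (metis surjD)
      obtain p' where p': "p = GA p'" using sGA by (metis surjD)
      have "gR (z - \<phi>B p') = 0" by (simp add: rhom_diff[OF gR_hom(1)] comm' p p')
      then obtain r where "z - \<phi>B p' = r * T" using kgR by blast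
      then have "z = \<phi>B p' + r * T" by (simp add: algebra_simps)
      then show "\<exists>p r. z = \<phi>B p + r * T" by blast
    qed
    show ?thesis
    proof (rule surjI[of _ "\<lambda>z. SOME p. \<phi>B p = z"], rule someI_ex)
      fix z
      obtain p r where z1: "z = \<phi>B p + r * T" using pre by blast
      obtain p2 r2 where r1: "r = \<phi>B p2 + r2 * T" using pre by blast
      have "z = \<phi>B p + \<phi>B p2 * T + r2 * (T * T)" unfolding z1 r1 by (simp add: algebra_simps)
      also have "\<dots> = \<phi>B p + \<phi>B p2 * T" using TT by simp
      also have "\<dots> = \<phi>B (p + p2 * C2 \<tau>)" by (simp add: rhomD[OF \<phi>B] \<phi>BC T_def)
      finally show "\<exists>p. \<phi>B p = z" by metis
    qed
  qed
  have imgI: "ideal_gen (iS ` (nonunits :: 'b set)) \<subseteq> \<phi>B ` GM"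
  proof (rule ideal_gen_least[OF image_ideal[OF \<phi>B s\<phi>B GMid]])
    show "iS ` nonunits \<subseteq> \<phi>B ` GM"
    proof
      fix z assume "z \<in> iS ` (nonunits :: 'b set)"
      then obtain r where r: "r \<in> nonunits" "z = iS r" by blast
      then have "z = \<phi>B (C2 r)" using \<phi>BC by simp
      then show "z \<in> \<phi>B ` GM" using C2GM[OF r(1)] by blast
    qed
  qed
  have ker\<phi>B: "kernel \<phi>B = ideal_gen {fB}"
  proof
    show "ideal_gen {fB} \<subseteq> kernel \<phi>B"
      by (rule ideal_gen_least[OF kernel_ideal[OF \<phi>B]]) (simp add: kernel_def \<phi>BfB)
    show "kernel \<phi>B \<subseteq> ideal_gen {fB}"
    proof
      fix k assume "k \<in> kernel \<phi>B"
      then have k0: "\<phi>B k = 0" unfolding kernel_def by simp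
      obtain c h where kc: "k = c * fB + C2 \<tau> * h" using step1[OF k0] by blast
      have "\<phi>B k = \<phi>B c * \<phi>B fB + T * \<phi>B h" unfolding kc by (simp add: rhomD[OF \<phi>B] \<phi>BC T_def)
      then have Th: "T * \<phi>B h = 0" using k0 \<phi>BfB by simp
      show "k \<in> ideal_gen {fB}"
      proof (cases "\<tau> = 0")
        case True
        then have "k = c * fB" using kc by simp
        then show ?thesis unfolding ideal_gen_singleton by blast
      next
        case False
        have "\<phi>B h \<in> \<phi>B ` GM" using imgI annT2[OF Th False] by blast
        then obtain m where m: "m \<in> GM" "\<phi>B h = \<phi>B m" by blast
        have "\<phi>B (h - m) = 0" using m(2) by (simp add: rhom_diff[OF \<phi>B])
        then obtain c' h' where hm: "h - m = c' * fB + C2 \<tau> * h'" using step1 by blast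
        have hh: "h = m + c' * fB + C2 \<tau> * h'" using hm by (simp add: algebra_simps)
        have CC: "C2 \<tau> * C2 \<tau> = 0" using \<tau>\<tau> by (simp add: rhomD(3)[OF rhom_C2, symmetric])
        have "k = (c + C2 \<tau> * c') * fB + C2 \<tau> * m + (C2 \<tau> * C2 \<tau>) * h'"
          unfolding kc hh by (simp add: algebra_simps)
        also have "\<dots> = (c + C2 \<tau> * c') * fB" using CC GMann[OF m(1)] by simp
        finally show ?thesis unfolding ideal_gen_singleton by blast
      qed
    qed
  qed
  have hx: "hS x = pi0 X2" unfolding x_def by (simp add: rhomD[OF hS] hST hx0)
  have hy: "hS y = pi0 Y2" unfolding y_def by (simp add: rhomD[OF hS] hST hy0)
  have \<phi>BC': "\<phi>B \<circ> C2 = iS" using \<phi>BC by (simp add: fun_eq_iff)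
  show ?thesis
    unfolding planar_def
    using snu tnu \<phi>B s\<phi>B ker\<phi>B \<phi>BC' \<phi>BX \<phi>BY hx hy s_def t_def
    unfolding fB_def gB_def dB_def by blast
qed

end
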